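(* Fix $k,\gamma>0$ and let $g_\sigma(x)=\Gamma(k/\gamma)^{-1}\sigma^{-k}\gamma x^{k-1}e^{-(x/\sigma)^\gamma}$, $x>0$, be the generalized gamma scale family, with natural parameter $\eta=\sigma^{-\gamma}$. Let $\eta_{\mathrm{train}}>0$ and let $\eta_{\mathrm{test}}>0$ be a random variable that is not almost surely constant, such that $\log\eta_{\mathrm{test}}$ has a distribution symmetric about $\log\eta_{\mathrm{train}}$ and $\mathbb{E}[1/\eta_{\mathrm{test}}]<\infty$. Let $Y$ have conditional density $g_{\sigma_{\mathrm{test}}}$ given $\eta_{\mathrm{test}}$, where $\sigma_{\mathrm{test}}=\eta_{\mathrm{test}}^{-1/\gamma}$. Then the scale $\sigma^*>0$ minimizing the expected logarithmic loss $\mathbb{E}[-\log g_\sigma(Y)]$ over $\sigma>0$ exists, is unique, is given by $(\sigma^* )^{\gamma}=\mathbb{E}[1/\eta_{\mathrm{test}}]$, and satisfies $\sigma^*>\sigma_{\mathrm{train}}:=\eta_{\mathrm{train}}^{-1/\gamma}$.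
   Context: Logarithmic loss of forecast density $f$ at outcome $y$: $-\log f(y)$. *)

theory Defs
  imports "HOL-Probability.Probability"
begin

definition gengamma_density :: "real \<Rightarrow> real \<Rightarrow> real \<Rightarrow> real \<Rightarrow> real" where
  "gengamma_density k \<gamma> \<sigma> x =
     (if x > 0 then \<gamma> * x powr (k - 1) * exp (- ((x / \<sigma>) powr \<gamma>)) / (Gamma (k / \<gamma>) * \<sigma> powr k)
      else 0)"

definition scale_of_nat :: "real \<Rightarrow> real \<Rightarrow> real" where
  "scale_of_nat \<gamma> \<eta> = \<eta> powr (- 1 / \<gamma>)"

definition exp_log_loss :: "'a measure \<Rightarrow> ('a \<Rightarrow> real) \<Rightarrow> real \<Rightarrow> real \<Rightarrow> real \<Rightarrow> real" where
  "exp_log_loss M Y k \<gamma> \<sigma> = (\<integral>\<omega>. - ln (gengamma_density k \<gamma> \<sigma> (Y \<omega>)) \<partial>M)"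

end

theory Submission
  imports Defs
begin

lemma gamma_nn:
  fixes s :: real
  assumes "s > 0"
  shows "(\<integral>\<^sup>+u. ennreal (indicator {0<..} u * (u powr (s - 1) / exp u)) \<partial>lborel) = ennreal (Gamma s)"
proof -
  have "(\<integral>\<^sup>+u. ennreal (indicator {0<..} u * (u powr (s - 1) / exp u)) \<partial>lborel)
     = (\<integral>\<^sup>+t. ennreal (indicator {0..} t * t powr (s - 1) / exp t) \<partial>lborel)"
    by (intro nn_integral_cong) (auto simp: indicator_def)
  also have "\<dots> = ennreal (Gamma s)"
    using Gamma_conv_nn_integral_real[OF assms] by simp
  finally show ?thesis .
qed

lemma gamma_set_integrable:
  fixes s :: real
  assumes "s > 0"
  shows "set_integrable lborel {0<..} (\<lambda>u. u powr (s - 1) / exp u)"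
    and "(LINT u:{0<..}|lborel. u powr (s - 1) / exp u) = Gamma s"
proof -
  have m: "(\<lambda>u. indicator {0<..} u * (u powr (s - 1) / exp u)) \<in> borel_measurable lborel"
    by (intro borel_measurable_times borel_measurable_indicator borel_measurable_divide powr_real_measurable[where f="\<lambda>x. x"] borel_measurable_exp borel_open) auto
  have int: "integrable lborel (\<lambda>u. indicator {0<..} u * (u powr (s - 1) / exp u))"
    by (rule integrableI_nonneg) (use m gamma_nn[of s] assms in auto)
  then show "set_integrable lborel {0<..} (\<lambda>u. u powr (s - 1) / exp u)"
    by (simp add: set_integrable_def)
  have "ennreal (LINT u:{0<..}|lborel. u powr (s - 1) / exp u) = 
     (\<integral>\<^sup>+u. ennreal (indicator {0<..} u * (u powr (s - 1) / exp u)) \<partial>lborel)"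
    unfolding set_lebesgue_integral_def
    by (subst nn_integral_eq_integral[OF int]) auto
  also have "\<dots> = ennreal (Gamma s)" by (rule gamma_nn[OF assms])
  finally show "(LINT u:{0<..}|lborel. u powr (s - 1) / exp u) = Gamma s"
    using Gamma_real_pos[OF assms] by (subst (asm) ennreal_inj) (auto simp: set_lebesgue_integral_def intro!: integral_nonneg_AE)
qed

lemma my_powr_at_top:
  assumes "(p::real) > 0"
  shows   "filterlim (\<lambda>x. x powr p) at_top at_top"
proof (subst filterlim_cong[OF refl refl])
  show "LIM x at_top. exp (p * ln x) :> at_top"
    by (rule filterlim_compose[OF exp_at_top filterlim_tendsto_pos_mult_at_top[OF tendsto_const]])
       (simp_all add: ln_at_top assms)
  show "eventually (\<lambda>x. x powr p = exp (p * ln x)) at_top"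
    using eventually_gt_at_top[of 0] by eventually_elim (simp add: powr_def)
qed

lemma gg_nonneg:
  assumes "\<gamma> > 0" "\<sigma> > 0" "k > 0"
  shows "gengamma_density k \<gamma> \<sigma> y \<ge> 0"
  using assms Gamma_real_pos[of "k/\<gamma>"] by (auto simp: gengamma_density_def)

lemma subst_key:
  fixes k \<gamma> \<sigma> p u :: real
  assumes k: "k > 0" and g: "\<gamma> > 0" and s: "\<sigma> > 0" and u: "u > 0"
  shows "(\<sigma> * u powr (1/\<gamma>)) powr p * gengamma_density k \<gamma> \<sigma> (\<sigma> * u powr (1/\<gamma>)) * (\<sigma> / \<gamma> * u powr (1/\<gamma> - 1))
     = \<sigma> powr p / Gamma (k/\<gamma>) * (u powr ((k+p)/\<gamma> - 1) / exp u)"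
proof -
  have pos: "\<sigma> * u powr (1/\<gamma>) > 0" using s u by simp
  have e: "((\<sigma> * u powr (1/\<gamma>)) / \<sigma>) powr \<gamma> = u"
    using s u g by (simp add: powr_powr)
  have a: "(\<sigma> * u powr (1/\<gamma>)) powr p = \<sigma> powr p * u powr (p/\<gamma>)"
    using s u by (simp add: powr_mult powr_powr)
  have b: "(\<sigma> * u powr (1/\<gamma>)) powr (k-1) = \<sigma> powr (k-1) * u powr ((k-1)/\<gamma>)"
    using s u by (simp add: powr_mult powr_powr)
  have c: "u powr (p/\<gamma>) * u powr ((k-1)/\<gamma>) * u powr (1/\<gamma> - 1) = u powr ((k+p)/\<gamma> - 1)"
    using u g by (simp add: powr_add[symmetric] add_divide_distrib diff_divide_distrib algebra_simps)
  have d: "\<sigma> powr (k-1) * \<sigma> = \<sigma> powr k"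
    using s by (simp add: powr_add[symmetric] powr_diff)
  have G: "Gamma (k/\<gamma>) > 0" using k g by (intro Gamma_real_pos) simp
  show ?thesis
    unfolding gengamma_density_def using pos
    apply (simp only: if_True e a b exp_minus)
    using G s g c[symmetric] d[symmetric]
    by (simp add: field_simps)
qed

lemma gg_cont:
  assumes "y > 0" "\<sigma> > 0" "k > 0" "\<gamma> > 0"
  shows "isCont (\<lambda>y. y powr p * gengamma_density k \<gamma> \<sigma> y) y"
proof -
  have ev: "eventually (\<lambda>x. x powr p * gengamma_density k \<gamma> \<sigma> x =
      x powr p * (\<gamma> * x powr (k - 1) * exp (- ((x / \<sigma>) powr \<gamma>)) / (Gamma (k / \<gamma>) * \<sigma> powr k))) (nhds y)"
    using eventually_nhds_in_open[of "{0<..}" y] assms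
    by (auto elim!: eventually_mono simp: gengamma_density_def)
  have "Gamma (k/\<gamma>) > 0" using assms by (intro Gamma_real_pos) simp
  then have "Gamma (k/\<gamma>) \<noteq> 0" by simp
  then have "isCont (\<lambda>x. x powr p * (\<gamma> * x powr (k - 1) * exp (- ((x / \<sigma>) powr \<gamma>)) / (Gamma (k / \<gamma>) * \<sigma> powr k))) y"
    using assms by (auto intro!: continuous_intros)
  then show ?thesis using isCont_cong[OF ev] by simp
qed

lemma moment:
  fixes k \<gamma> \<sigma> p :: real
  assumes k: "k > 0" and g: "\<gamma> > 0" and s: "\<sigma> > 0" and kp: "k + p > 0"
  shows "(\<integral>\<^sup>+y. ennreal (y powr p * gengamma_density k \<gamma> \<sigma> y) \<partial>lborel)
     = ennreal (\<sigma> powr p * Gamma ((k+p)/\<gamma>) / Gamma (k/\<gamma>))"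
proof -
  define f where "f y = y powr p * gengamma_density k \<gamma> \<sigma> y" for y
  define G where "G u = \<sigma> * u powr (1/\<gamma>)" for u
  define G' where "G' u = \<sigma> / \<gamma> * u powr (1/\<gamma> - 1)" for u
  define C where "C = \<sigma> powr p / Gamma (k/\<gamma>)"
  have sp: "(k+p)/\<gamma> > 0" using kp g by simp
  have f0: "f y = 0" if "y \<le> 0" for y using that by (simp add: f_def gengamma_density_def)
  have fnn: "f y \<ge> 0" for y
    using gg_nonneg[OF g s k, of y] by (cases "y > 0") (auto simp: f_def f0)
  have key: "f (G u) * G' u = C * (u powr ((k+p)/\<gamma> - 1) / exp u)" if "u > 0" for u
    unfolding f_def G_def G'_def C_def using subst_key[OF k g s that, of p] by simp
  have intfg: "set_integrable lborel (einterval 0 \<infinity>) (\<lambda>x. f (G x) * G' x)"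
  proof -
    have "set_integrable lborel {0<..} (\<lambda>x. C * (x powr ((k+p)/\<gamma> - 1) / exp x))"
      using gamma_set_integrable(1)[OF sp] by (rule set_integrable_mult_right)
    moreover have "set_integrable lborel {0<..} (\<lambda>x. C * (x powr ((k+p)/\<gamma> - 1) / exp x))
       = set_integrable lborel (einterval 0 \<infinity>) (\<lambda>x. f (G x) * G' x)"
      by (rule set_integrable_cong) (auto simp: key zero_ereal_def)
    ultimately show ?thesis by simp
  qed
  have sub: "set_integrable lborel (einterval 0 \<infinity>) f \<and>
            (LBINT x=0..\<infinity>. f x) = (LBINT x=0..\<infinity>. (f (G x) * G' x))"
  proof -
    have h1: "(0::ereal) < \<infinity>" by simp
    have h2: "DERIV G x :> G' x" if "0 < ereal x" "ereal x < \<infinity>" for x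
    proof -
      have x: "x > 0" using that by (simp add: zero_ereal_def)
      show ?thesis unfolding G_def G'_def
        using DERIV_fun_powr[OF DERIV_ident, of x "1/\<gamma>"] x
        by (auto intro!: derivative_eq_intros simp: field_simps)
    qed
    have h3: "isCont f (G x)" if "0 < ereal x" "ereal x < \<infinity>" for x
    proof -
      have x: "x > 0" using that by (simp add: zero_ereal_def)
      then show ?thesis unfolding f_def G_def using s k g by (intro gg_cont) auto
    qed
    have h4: "isCont G' x" if "0 < ereal x" "ereal x < \<infinity>" for x
    proof -
      have x: "x > 0" using that by (simp add: zero_ereal_def)
      then show ?thesis unfolding G'_def using g by (auto intro!: continuous_intros)
    qed
    have h5: "0 \<le> f (G x)" for x by (rule fnn)
    have h6: "0 \<le> G' x" for x using s g by (simp add: G'_def)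
    have h7: "((ereal \<circ> G \<circ> real_of_ereal) \<longlongrightarrow> 0) (at_right 0)"
    proof -
      have "((\<lambda>u. \<sigma> * u powr (1/\<gamma>)) \<longlongrightarrow> \<sigma> * 0) (at_right 0)"
        by (intro tendsto_mult tendsto_const tendsto_zero_powrI[where b="1/\<gamma>"])
           (use g in \<open>auto intro!: tendsto_ident_at eventually_at_rightI[of 0 1]\<close>)
      then have "(G \<longlongrightarrow> 0) (at_right 0)" by (simp add: G_def[abs_def])
      then show ?thesis unfolding zero_ereal_def
        by (simp add: ereal_tendsto_simps1 ereal_tendsto_simps2)
    qed
    have h8: "((ereal \<circ> G \<circ> real_of_ereal) \<longlongrightarrow> \<infinity>) (at_left \<infinity>)"
    proof -
      have "filterlim (\<lambda>u. \<sigma> * u powr (1/\<gamma>)) at_top at_top"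
        by (rule filterlim_tendsto_pos_mult_at_top[OF tendsto_const s my_powr_at_top]) (use g in simp)
      then have "filterlim G at_top at_top" by (simp add: G_def[abs_def])
      then show ?thesis
        by (simp add: ereal_tendsto_simps1 ereal_tendsto_simps2)
    qed
    have h9: "set_integrable lborel (einterval 0 \<infinity>) (\<lambda>x. f (G x) * G' x)" by (rule intfg)
    from interval_integral_substitution_nonneg[OF h1 h2 h3 h4 h5 h6 h7 h8 h9] show ?thesis by simp
  qed
  have val: "(LBINT x=0..\<infinity>. (f (G x) * G' x)) = C * Gamma ((k+p)/\<gamma>)"
  proof -
    have "(LBINT x=0..\<infinity>. (f (G x) * G' x)) = (LINT x:{0<..}|lborel. C * (x powr ((k+p)/\<gamma> - 1) / exp x))"
      unfolding interval_lebesgue_integral_0_infty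
      by (rule set_lebesgue_integral_cong) (auto simp: key)
    also have "\<dots> = C * Gamma ((k+p)/\<gamma>)"
      using gamma_set_integrable[OF sp] by (simp only: set_integral_mult_right)
    finally show ?thesis .
  qed
  have int: "integrable lborel (\<lambda>y. indicator {0<..} y * f y)"
    using sub by (simp add: set_integrable_def zero_ereal_def)
  have "(\<integral>\<^sup>+y. ennreal (f y) \<partial>lborel) = (\<integral>\<^sup>+y. ennreal (indicator {0<..} y * f y) \<partial>lborel)"
    by (intro nn_integral_cong) (auto simp: indicator_def f0)
  also have "\<dots> = ennreal (LINT y:{0<..}|lborel. f y)"
    unfolding set_lebesgue_integral_def
    by (subst nn_integral_eq_integral[OF int]) (auto simp: fnn)
  also have "(LINT y:{0<..}|lborel. f y) = C * Gamma ((k+p)/\<gamma>)"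
    using sub val by (simp add: interval_lebesgue_integral_0_infty)
  finally show ?thesis unfolding f_def C_def by simp
qed

lemma gg_total:
  assumes k: "k > 0" and g: "\<gamma> > 0" and s: "\<sigma> > 0"
  shows "(\<integral>\<^sup>+y. ennreal (gengamma_density k \<gamma> \<sigma> y) \<partial>lborel) = 1"
proof -
  have "(\<integral>\<^sup>+y. ennreal (gengamma_density k \<gamma> \<sigma> y) \<partial>lborel)
      = (\<integral>\<^sup>+y. ennreal (y powr 0 * gengamma_density k \<gamma> \<sigma> y) \<partial>lborel)"
    by (intro nn_integral_cong) (auto simp: gengamma_density_def)
  also have "\<dots> = 1"
  proof -
    have "Gamma (k/\<gamma>) > 0" using k g by (intro Gamma_real_pos) simp
    then show ?thesis using moment[OF k g s, of 0] k s by simp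
  qed
  finally show ?thesis .
qed

lemma gg_meas[measurable]: "(\<lambda>y. gengamma_density k \<gamma> \<sigma> y) \<in> borel_measurable borel"
  unfolding gengamma_density_def by measurable

lemma gg_integrable:
  assumes k: "k > 0" and g: "\<gamma> > 0" and s: "\<sigma> > 0"
  shows "integrable lborel (gengamma_density k \<gamma> \<sigma>)"
  by (rule integrableI_nonneg) (use gg_total[OF assms] gg_nonneg[OF g s k] in auto)

locale setting =
  fixes M :: "'a measure" and eta Y :: "'a \<Rightarrow> real" and k \<gamma> :: real
  assumes P: "prob_space M"
    and k_pos: "k > 0" and gamma_pos: "\<gamma> > 0"
    and eta_meas[measurable]: "eta \<in> borel_measurable M"
    and Y_meas[measurable]: "Y \<in> borel_measurable M"
    and eta_pos: "\<forall>\<omega>\<in>space M. eta \<omega> > 0"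
    and cond_density: "\<forall>A\<in>sets borel. \<forall>B\<in>sets borel.
        measure M {\<omega>\<in>space M. eta \<omega> \<in> A \<and> Y \<omega> \<in> B}
        = (\<integral>\<omega>. indicator A (eta \<omega>) *
              (LINT y:B|lborel. gengamma_density k \<gamma> (scale_of_nat \<gamma> (eta \<omega>)) y) \<partial>M)"
begin

interpretation prob_space M by (rule P)

definition sig where "sig \<omega> = scale_of_nat \<gamma> (eta \<omega>)"

lemma sig_pos: "\<omega> \<in> space M \<Longrightarrow> sig \<omega> > 0"
  using eta_pos by (auto simp: sig_def scale_of_nat_def)

lemma sig_meas[measurable]: "sig \<in> borel_measurable M"
  unfolding sig_def scale_of_nat_def by measurable

lemma joint_meas[measurable]: "(\<lambda>(\<omega>, y). gengamma_density k \<gamma> (sig \<omega>) y) \<in> borel_measurable (M \<Otimes>\<^sub>M lborel)"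
proof -
  have m: "(\<lambda>x. x powr a) \<in> borel_measurable borel" for a :: real by measurable
  have "(\<lambda>p. gengamma_density k \<gamma> (sig (fst p)) (snd p)) \<in> borel_measurable (M \<Otimes>\<^sub>M lborel)"
    unfolding gengamma_density_def
    apply (rule measurable_If)
    apply measurable
    done
  then show ?thesis by (simp add: case_prod_beta')
qed

definition q where "q y = (\<integral>\<^sup>+\<omega>. ennreal (gengamma_density k \<gamma> (sig \<omega>) y) \<partial>M)"

lemma jm2[measurable]: "(\<lambda>(y, \<omega>). gengamma_density k \<gamma> (sig \<omega>) y) \<in> borel_measurable (lborel \<Otimes>\<^sub>M M)"
proof -
  have "(\<lambda>p. gengamma_density k \<gamma> (sig (snd p)) (fst p)) \<in> borel_measurable (lborel \<Otimes>\<^sub>M M)"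
    unfolding gengamma_density_def
    apply (rule measurable_If)
    apply measurable
    done
  then show ?thesis by (simp add: case_prod_beta')
qed

lemma q_meas[measurable]: "q \<in> borel_measurable lborel"
  unfolding q_def by measurable

lemma psf: "pair_sigma_finite M lborel"
  by (intro pair_sigma_finite.intro) (simp_all add: sigma_finite_measure_axioms lborel.sigma_finite_measure_axioms)

lemma inner_set:
  assumes "\<omega> \<in> space M" "B \<in> sets borel"
  shows "(\<integral>\<^sup>+y. ennreal (gengamma_density k \<gamma> (sig \<omega>) y * indicator B y) \<partial>lborel)
       = ennreal (LINT y:B|lborel. gengamma_density k \<gamma> (sig \<omega>) y)"
    and "(LINT y:B|lborel. gengamma_density k \<gamma> (sig \<omega>) y) \<ge> 0"
    and "(LINT y:B|lborel. gengamma_density k \<gamma> (sig \<omega>) y) \<le> 1"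
proof -
  have s: "sig \<omega> > 0" using sig_pos assms by simp
  have int: "integrable lborel (\<lambda>y. indicator B y * gengamma_density k \<gamma> (sig \<omega>) y)"
    using integrable_real_mult_indicator[of B lborel, OF _ gg_integrable[OF k_pos gamma_pos s]] assms(2)
    by (simp add: mult.commute)
  show e: "(\<integral>\<^sup>+y. ennreal (gengamma_density k \<gamma> (sig \<omega>) y * indicator B y) \<partial>lborel)
       = ennreal (LINT y:B|lborel. gengamma_density k \<gamma> (sig \<omega>) y)"
    unfolding set_lebesgue_integral_def
    using nn_integral_eq_integral[OF int] gg_nonneg[OF gamma_pos s k_pos]
    by (simp add: mult.commute)
  show "(LINT y:B|lborel. gengamma_density k \<gamma> (sig \<omega>) y) \<ge> 0"
    unfolding set_lebesgue_integral_def
    using gg_nonneg[OF gamma_pos s k_pos] by (intro integral_nonneg_AE) (auto simp: indicator_def)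
  have "ennreal (LINT y:B|lborel. gengamma_density k \<gamma> (sig \<omega>) y)
     \<le> (\<integral>\<^sup>+y. ennreal (gengamma_density k \<gamma> (sig \<omega>) y) \<partial>lborel)"
    unfolding e[symmetric]
    by (intro nn_integral_mono) (auto simp: indicator_def)
  also have "\<dots> = 1" by (rule gg_total[OF k_pos gamma_pos s])
  finally show "(LINT y:B|lborel. gengamma_density k \<gamma> (sig \<omega>) y) \<le> 1"
    by simp
qed

lemma distrY: "distr M lborel Y = density lborel q"
proof (rule measure_eqI)
  show "sets (distr M lborel Y) = sets (density lborel q)" by simp
  fix A assume "A \<in> sets (distr M lborel Y)"
  then have A[measurable]: "A \<in> sets borel" by simp
  have "emeasure (distr M lborel Y) A = emeasure M (Y -` A \<inter> space M)"
    by (rule emeasure_distr) auto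
  also have "\<dots> = ennreal (measure M {\<omega>\<in>space M. eta \<omega> \<in> UNIV \<and> Y \<omega> \<in> A})"
  proof -
    have "Y -` A \<inter> space M = {\<omega>\<in>space M. eta \<omega> \<in> UNIV \<and> Y \<omega> \<in> A}" by auto
    then show ?thesis by (simp only: emeasure_eq_measure)
  qed
  also have "measure M {\<omega>\<in>space M. eta \<omega> \<in> UNIV \<and> Y \<omega> \<in> A}
     = (\<integral>\<omega>. (LINT y:A|lborel. gengamma_density k \<gamma> (sig \<omega>) y) \<partial>M)"
    using cond_density[rule_format, of UNIV A] A unfolding sig_def by simp
  also have "ennreal \<dots> = (\<integral>\<^sup>+\<omega>. ennreal (LINT y:A|lborel. gengamma_density k \<gamma> (sig \<omega>) y) \<partial>M)"
  proof (rule nn_integral_eq_integral[symmetric])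
    show "integrable M (\<lambda>\<omega>. LINT y:A|lborel. gengamma_density k \<gamma> (sig \<omega>) y)"
    proof (rule integrable_const_bound[where B=1])
      show "AE x in M. norm (LINT y:A|lborel. gengamma_density k \<gamma> (sig x) y) \<le> 1"
        using inner_set[OF _ A] by (auto intro!: AE_I2)
      show "(\<lambda>\<omega>. LINT y:A|lborel. gengamma_density k \<gamma> (sig \<omega>) y) \<in> borel_measurable M"
        unfolding set_lebesgue_integral_def by measurable
    qed
    show "AE x in M. 0 \<le> (LINT y:A|lborel. gengamma_density k \<gamma> (sig x) y)"
      using inner_set[OF _ A] by (auto intro!: AE_I2)
  qed
  also have "\<dots> = (\<integral>\<^sup>+\<omega>. (\<integral>\<^sup>+y. ennreal (gengamma_density k \<gamma> (sig \<omega>) y * indicator A y) \<partial>lborel) \<partial>M)"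
    by (intro nn_integral_cong) (simp add: inner_set(1)[OF _ A])
  also have "\<dots> = (\<integral>\<^sup>+y. (\<integral>\<^sup>+\<omega>. ennreal (gengamma_density k \<gamma> (sig \<omega>) y * indicator A y) \<partial>M) \<partial>lborel)"
    by (rule pair_sigma_finite.Fubini'[OF psf, symmetric]) measurable
  also have "\<dots> = (\<integral>\<^sup>+y. q y * indicator A y \<partial>lborel)"
    unfolding q_def
    by (intro nn_integral_cong) (auto simp: indicator_def)
  also have "\<dots> = emeasure (density lborel q) A"
    by (rule emeasure_density[symmetric]) auto
  finally show "emeasure (distr M lborel Y) A = emeasure (density lborel q) A" .
qed

lemma mixture:
  assumes [measurable]: "h \<in> borel_measurable borel"
  shows "(\<integral>\<^sup>+\<omega>. h (Y \<omega>) \<partial>M) = (\<integral>\<^sup>+\<omega>. (\<integral>\<^sup>+y. ennreal (gengamma_density k \<gamma> (sig \<omega>) y) * h y \<partial>lborel) \<partial>M)"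
proof -
  have "(\<integral>\<^sup>+\<omega>. h (Y \<omega>) \<partial>M) = (\<integral>\<^sup>+y. h y \<partial>distr M lborel Y)"
    by (rule nn_integral_distr[symmetric]) auto
  also have "\<dots> = (\<integral>\<^sup>+y. q y * h y \<partial>lborel)"
    unfolding distrY by (rule nn_integral_density) auto
  also have "\<dots> = (\<integral>\<^sup>+y. (\<integral>\<^sup>+\<omega>. ennreal (gengamma_density k \<gamma> (sig \<omega>) y) * h y \<partial>M) \<partial>lborel)"
    unfolding q_def by (intro nn_integral_cong) (simp add: nn_integral_multc)
  also have "\<dots> = (\<integral>\<^sup>+\<omega>. (\<integral>\<^sup>+y. ennreal (gengamma_density k \<gamma> (sig \<omega>) y) * h y \<partial>lborel) \<partial>M)"
    by (rule pair_sigma_finite.Fubini'[OF psf]) measurable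
  finally show ?thesis .
qed

lemma Y_pos_AE: "AE \<omega> in M. Y \<omega> > 0"
proof -
  have z: "\<And>\<omega>. (\<lambda>y. ennreal (gengamma_density k \<gamma> (sig \<omega>) y) * indicator {..0} y) = (\<lambda>y. 0)"
    by (auto simp: gengamma_density_def indicator_def)
  have "(\<integral>\<^sup>+\<omega>. indicator {..0} (Y \<omega>) \<partial>M) = (\<integral>\<^sup>+\<omega>. (\<integral>\<^sup>+y. ennreal (gengamma_density k \<gamma> (sig \<omega>) y) * indicator {..0} y \<partial>lborel) \<partial>M)"
    by (rule mixture) measurable
  then have "(\<integral>\<^sup>+\<omega>. indicator {..0} (Y \<omega>) \<partial>M) = 0" by (simp only: z) simp
  then have "AE \<omega> in M. (indicator {..0} (Y \<omega>) :: ennreal) = 0"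
    by (subst (asm) nn_integral_0_iff_AE) auto
  then show ?thesis by eventually_elim (auto simp: indicator_def split: if_splits)
qed

lemma Y_moment:
  assumes kp: "k + p > 0"
  shows "(\<integral>\<^sup>+\<omega>. ennreal (Y \<omega> powr p) \<partial>M)
     = (\<integral>\<^sup>+\<omega>. ennreal (eta \<omega> powr (- p / \<gamma>) * (Gamma ((k+p)/\<gamma>) / Gamma (k/\<gamma>))) \<partial>M)"
proof -
  have "(\<integral>\<^sup>+\<omega>. ennreal (Y \<omega> powr p) \<partial>M) = (\<integral>\<^sup>+\<omega>. (\<integral>\<^sup>+y. ennreal (gengamma_density k \<gamma> (sig \<omega>) y) * ennreal (y powr p) \<partial>lborel) \<partial>M)"
    by (rule mixture) measurable
  also have "\<dots> = (\<integral>\<^sup>+\<omega>. ennreal (eta \<omega> powr (- p / \<gamma>) * (Gamma ((k+p)/\<gamma>) / Gamma (k/\<gamma>))) \<partial>M)"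
  proof (rule nn_integral_cong)
    fix \<omega> assume w: "\<omega> \<in> space M"
    have s: "sig \<omega> > 0" using sig_pos w by simp
    have "(\<integral>\<^sup>+y. ennreal (gengamma_density k \<gamma> (sig \<omega>) y) * ennreal (y powr p) \<partial>lborel)
        = (\<integral>\<^sup>+y. ennreal (y powr p * gengamma_density k \<gamma> (sig \<omega>) y) \<partial>lborel)"
      using gg_nonneg[OF gamma_pos s k_pos]
      by (intro nn_integral_cong) (simp add: ennreal_mult'' mult.commute)
    also have "\<dots> = ennreal (sig \<omega> powr p * Gamma ((k+p)/\<gamma>) / Gamma (k/\<gamma>))"
      by (rule moment[OF k_pos gamma_pos s kp])
    also have "sig \<omega> powr p = eta \<omega> powr (- p / \<gamma>)"
      unfolding sig_def scale_of_nat_def by (simp add: powr_powr)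
    finally show "(\<integral>\<^sup>+y. ennreal (gengamma_density k \<gamma> (sig \<omega>) y) * ennreal (y powr p) \<partial>lborel)
        = ennreal (eta \<omega> powr (- p / \<gamma>) * (Gamma ((k+p)/\<gamma>) / Gamma (k/\<gamma>)))" by simp
  qed
  finally show ?thesis .
qed

end

lemma exp_strict: fixes x :: real assumes "x \<noteq> 0" shows "1 + x < exp x"
proof (cases "1 + x/2 \<ge> 0")
  case True
  have "exp x = exp (x/2)^2" by (simp add: power2_eq_square exp_add[symmetric])
  moreover have "(1 + x/2)^2 \<le> exp (x/2)^2"
    using True exp_ge_add_one_self[of "x/2"] by (intro power_mono) auto
  moreover have "x * x > 0" using assms by (metis not_real_square_gt_zero)
  moreover have "1 + x < (1 + x/2)^2" using calculation(3) by (simp add: power2_eq_square field_simps)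
  ultimately show ?thesis by linarith
next
  case False
  then have "1 + x < 0" by linarith
  then show ?thesis using exp_gt_zero[of x] by linarith
qed

lemma ln_strict: fixes t :: real assumes "t > 0" "t \<noteq> 1" shows "ln t < t - 1"
proof -
  have "ln t \<noteq> 0" using assms by simp
  from exp_strict[OF this] show ?thesis using assms by simp
qed

lemma min_lemma:
  fixes k \<gamma> Q \<sigma> :: real
  assumes k: "k > 0" and g: "\<gamma> > 0" and Q: "Q > 0" and s: "\<sigma> > 0"
  shows "k * ln \<sigma> + (k/\<gamma>) * Q / \<sigma> powr \<gamma> \<ge> k * ln (Q powr (1/\<gamma>)) + (k/\<gamma>) * Q / (Q powr (1/\<gamma>)) powr \<gamma>"
    and "\<sigma> \<noteq> Q powr (1/\<gamma>) \<Longrightarrow> k * ln \<sigma> + (k/\<gamma>) * Q / \<sigma> powr \<gamma> > k * ln (Q powr (1/\<gamma>)) + (k/\<gamma>) * Q / (Q powr (1/\<gamma>)) powr \<gamma>"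
proof -
  define t where "t = Q / \<sigma> powr \<gamma>"
  have t: "t > 0" using Q s by (simp add: t_def)
  have e1: "(Q powr (1/\<gamma>)) powr \<gamma> = Q" using Q g by (simp add: powr_powr)
  have e2: "ln (Q powr (1/\<gamma>)) = ln Q / \<gamma>" using Q by (simp add: ln_powr)
  have e3: "ln t = ln Q - \<gamma> * ln \<sigma>" using Q s by (simp add: t_def ln_div ln_powr)
  have diff: "(k * ln \<sigma> + (k/\<gamma>) * Q / \<sigma> powr \<gamma>) - (k * ln (Q powr (1/\<gamma>)) + (k/\<gamma>) * Q / (Q powr (1/\<gamma>)) powr \<gamma>)
     = (k/\<gamma>) * (t - 1 - ln t)"
    unfolding e1 e2 e3 using g Q by (simp add: t_def field_simps)
  have "t - 1 - ln t \<ge> 0" using ln_le_minus_one[OF t] by simp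
  then have "(k/\<gamma>) * (t - 1 - ln t) \<ge> 0" using k g by simp
  then show "k * ln \<sigma> + (k/\<gamma>) * Q / \<sigma> powr \<gamma> \<ge> k * ln (Q powr (1/\<gamma>)) + (k/\<gamma>) * Q / (Q powr (1/\<gamma>)) powr \<gamma>"
    using diff by linarith
  assume ne: "\<sigma> \<noteq> Q powr (1/\<gamma>)"
  have "t \<noteq> 1"
  proof
    assume "t = 1"
    then have "\<sigma> powr \<gamma> = Q" using s by (simp add: t_def)
    then have "(\<sigma> powr \<gamma>) powr (1/\<gamma>) = Q powr (1/\<gamma>)" by simp
    then show False using ne s g by (simp add: powr_powr)
  qed
  then have "t - 1 - ln t > 0" using ln_strict[OF t] by simp
  then have "(k/\<gamma>) * (t - 1 - ln t) > 0" using k g by simp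
  then show "k * ln \<sigma> + (k/\<gamma>) * Q / \<sigma> powr \<gamma> > k * ln (Q powr (1/\<gamma>)) + (k/\<gamma>) * Q / (Q powr (1/\<gamma>)) powr \<gamma>"
    using diff by linarith
qed

lemma neg_powr_bound:
  fixes x t :: real assumes "x > 0" "0 \<le> t" "t \<le> 1"
  shows "x powr (-t) \<le> 1 + 1/x"
proof (cases "ln x \<ge> 0")
  case True
  have "x powr (-t) = exp (-t * ln x)" using assms by (simp add: powr_def)
  also have "\<dots> \<le> exp 0" using True assms by (subst exp_le_cancel_iff) (simp add: mult_nonneg_nonneg)
  finally have "x powr (-t) \<le> 1" by simp
  moreover have "1/x > 0" using assms by simp
  ultimately show ?thesis by linarith
next
  case False
  have "x powr (-t) = exp (-t * ln x)" using assms by (simp add: powr_def)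
  also have "\<dots> \<le> exp (- ln x)" using False assms by (subst exp_le_cancel_iff) (simp add: mult_le_cancel_right1 mult_left_le_one_le)
  also have "\<dots> = 1/x" using assms by (simp add: exp_minus inverse_eq_divide)
  finally show ?thesis by simp
qed

lemma log_bound:
  fixes y e :: real assumes "y > 0" "e > 0"
  shows "\<bar>ln y\<bar> \<le> (y powr e + y powr (-e)) / e"
proof -
  have "ln (y powr e) \<le> y powr e - 1" using assms by (intro ln_le_minus_one) simp
  then have a: "e * ln y \<le> y powr e" using assms by (simp add: ln_powr)
  have "ln (y powr (-e)) \<le> y powr (-e) - 1" using assms by (intro ln_le_minus_one) simp
  then have b: "- e * ln y \<le> y powr (-e)" using assms by (simp add: ln_powr)
  have c: "y powr e \<ge> 0" "y powr (-e) \<ge> 0" by simp_all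
  have "e * \<bar>ln y\<bar> \<le> y powr e + y powr (-e)"
  proof (cases "ln y \<ge> 0")
    case True then show ?thesis using a c by linarith
  next
    case False then show ?thesis using b c by linarith
  qed
  then show ?thesis using assms by (simp add: field_simps)
qed


lemma ln_gg:
  fixes k \<gamma> \<sigma> y :: real
  assumes k: "k > 0" and g: "\<gamma> > 0" and s: "\<sigma> > 0" and y: "y > 0"
  shows "- ln (gengamma_density k \<gamma> \<sigma> y) = ln (Gamma (k/\<gamma>)) - ln \<gamma> + k * ln \<sigma> - (k - 1) * ln y + y powr \<gamma> / \<sigma> powr \<gamma>"
proof -
  have G: "Gamma (k/\<gamma>) > 0" using k g by (intro Gamma_real_pos) simp
  have "ln (gengamma_density k \<gamma> \<sigma> y) = ln (\<gamma> * y powr (k - 1) * exp (- ((y / \<sigma>) powr \<gamma>))) - ln (Gamma (k / \<gamma>) * \<sigma> powr k)"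
    unfolding gengamma_density_def using y g s G by (simp add: ln_div)
  also have "ln (\<gamma> * y powr (k - 1) * exp (- ((y / \<sigma>) powr \<gamma>))) = ln \<gamma> + (k - 1) * ln y - (y / \<sigma>) powr \<gamma>"
    using y g by (simp add: ln_mult ln_powr)
  also have "ln (Gamma (k / \<gamma>) * \<sigma> powr k) = ln (Gamma (k/\<gamma>)) + k * ln \<sigma>"
    using G s by (simp add: ln_mult ln_powr)
  also have "(y / \<sigma>) powr \<gamma> = y powr \<gamma> / \<sigma> powr \<gamma>"
    using y s by (simp add: powr_divide)
  finally show ?thesis by simp
qed

theorem mainTheorem11:
  fixes M :: "'a measure" and eta_test Y :: "'a \<Rightarrow> real"
    and k \<gamma> eta_train :: real
  assumes "prob_space M"
    and k_pos: "k > 0" and gamma_pos: "\<gamma> > 0"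
    and train_pos: "eta_train > 0"
    and eta_meas: "eta_test \<in> borel_measurable M"
    and Y_meas: "Y \<in> borel_measurable M"
    and eta_pos: "\<forall>\<omega>\<in>space M. eta_test \<omega> > 0"
    and nonconst: "\<not> (\<exists>c. AE \<omega> in M. eta_test \<omega> = c)"
    and symm: "distr M borel (\<lambda>\<omega>. ln (eta_test \<omega>) - ln eta_train)
             = distr M borel (\<lambda>\<omega>. ln eta_train - ln (eta_test \<omega>))"
    and inv_int: "integrable M (\<lambda>\<omega>. 1 / eta_test \<omega>)"
    and cond_density: "\<forall>A\<in>sets borel. \<forall>B\<in>sets borel.
        measure M {\<omega>\<in>space M. eta_test \<omega> \<in> A \<and> Y \<omega> \<in> B}
        = (\<integral>\<omega>. indicator A (eta_test \<omega>) *
              (LINT y:B|lborel. gengamma_density k \<gamma> (scale_of_nat \<gamma> (eta_test \<omega>)) y) \<partial>M)"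
  shows "(\<forall>\<sigma>>0. integrable M (\<lambda>\<omega>. - ln (gengamma_density k \<gamma> \<sigma> (Y \<omega>))))
       \<and> (\<exists>!s. s > 0 \<and> (\<forall>\<sigma>>0. exp_log_loss M Y k \<gamma> s \<le> exp_log_loss M Y k \<gamma> \<sigma>))
       \<and> (\<forall>s. s > 0 \<and> (\<forall>\<sigma>>0. exp_log_loss M Y k \<gamma> s \<le> exp_log_loss M Y k \<gamma> \<sigma>) \<longrightarrow>
             s powr \<gamma> = (\<integral>\<omega>. 1 / eta_test \<omega> \<partial>M)
             \<and> s > scale_of_nat \<gamma> eta_train)"
proof -
  interpret P: prob_space M by fact
  interpret S: setting M eta_test Y k \<gamma>
    by unfold_locales (use assms in auto)
  define c where "c = ln eta_train"
  define X where "X \<omega> = ln (eta_test \<omega>) - c" for \<omega>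
  define Q where "Q = (\<integral>\<omega>. 1 / eta_test \<omega> \<partial>M)"
  have G0: "Gamma (k/\<gamma>) > 0" using k_pos gamma_pos by (intro Gamma_real_pos) simp
  have Xm[measurable]: "X \<in> borel_measurable M" unfolding X_def by measurable
  have symnn: "(\<integral>\<^sup>+\<omega>. h (X \<omega>) \<partial>M) = (\<integral>\<^sup>+\<omega>. h (- X \<omega>) \<partial>M)"
    if hm[measurable]: "h \<in> borel_measurable borel" for h :: "real \<Rightarrow> ennreal"
  proof -
    have "(\<integral>\<^sup>+x. h x \<partial>distr M borel (\<lambda>\<omega>. ln (eta_test \<omega>) - ln eta_train))
        = (\<integral>\<^sup>+x. h x \<partial>distr M borel (\<lambda>\<omega>. ln eta_train - ln (eta_test \<omega>)))"
      by (simp only: symm)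
    then show ?thesis
      by (subst (asm) (1 2) nn_integral_distr) (auto simp: X_def c_def)
  qed
  have inv_eq: "1 / eta_test \<omega> = (1/eta_train) * exp (- X \<omega>)" if "\<omega> \<in> space M" for \<omega>
    using that eta_pos train_pos by (simp add: X_def c_def exp_diff)
  have int_em: "integrable M (\<lambda>\<omega>. exp (- X \<omega>))"
  proof -
    have "integrable M (\<lambda>\<omega>. eta_train * (1 / eta_test \<omega>))" by (rule integrable_mult_right) (rule inv_int)
    moreover have "\<omega> \<in> space M \<Longrightarrow> eta_train * (1 / eta_test \<omega>) = exp (- X \<omega>)" for \<omega>
      using inv_eq[of \<omega>] train_pos by simp
    moreover have "integrable M (\<lambda>\<omega>. eta_train * (1 / eta_test \<omega>)) = integrable M (\<lambda>\<omega>. exp (- X \<omega>))"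
      using Bochner_Integration.integrable_cong[where M=M and N=M and f="\<lambda>\<omega>. eta_train * (1 / eta_test \<omega>)" and g="\<lambda>\<omega>. exp (- X \<omega>)"] calculation(2) by blast
    ultimately show ?thesis by simp
  qed
  have nnX: "(\<integral>\<^sup>+\<omega>. ennreal (exp (X \<omega>)) \<partial>M) = (\<integral>\<^sup>+\<omega>. ennreal (exp (- X \<omega>)) \<partial>M)"
    using symnn[of "\<lambda>x. ennreal (exp x)"] by simp
  have nnem: "(\<integral>\<^sup>+\<omega>. ennreal (exp (- X \<omega>)) \<partial>M) = ennreal (\<integral>\<omega>. exp (- X \<omega>) \<partial>M)"
    by (rule nn_integral_eq_integral[OF int_em]) simp
  have int_ep: "integrable M (\<lambda>\<omega>. exp (X \<omega>))"
    by (rule integrableI_nonneg) (auto simp: nnX nnem)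
  have eqXI: "(\<integral>\<omega>. exp (X \<omega>) \<partial>M) = (\<integral>\<omega>. exp (- X \<omega>) \<partial>M)"
  proof -
    have "ennreal (\<integral>\<omega>. exp (X \<omega>) \<partial>M) = ennreal (\<integral>\<omega>. exp (- X \<omega>) \<partial>M)"
      using nn_integral_eq_integral[OF int_ep] nnX nnem by simp
    then show ?thesis by (subst (asm) ennreal_inj) auto
  qed
  have nn2: "exp x + exp (-x) - 2 \<ge> 0" for x :: real
    using exp_ge_add_one_self[of x] exp_ge_add_one_self[of "-x"] by linarith
  have intf: "integrable M (\<lambda>\<omega>. exp (X \<omega>) + exp (- X \<omega>) - 2)"
    using int_ep int_em by simp
  have cosh_pos: "(\<integral>\<omega>. exp (X \<omega>) + exp (- X \<omega>) - 2 \<partial>M) > 0"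
  proof -
    have "(\<integral>\<omega>. exp (X \<omega>) + exp (- X \<omega>) - 2 \<partial>M) \<noteq> 0"
    proof
      assume "(\<integral>\<omega>. exp (X \<omega>) + exp (- X \<omega>) - 2 \<partial>M) = 0"
      then have "AE \<omega> in M. exp (X \<omega>) + exp (- X \<omega>) - 2 = 0"
        using integral_nonneg_eq_0_iff_AE[OF intf] nn2 by auto
      then have "AE \<omega> in M. eta_test \<omega> = eta_train"
      proof (rule AE_mp[OF _ AE_I2[OF impI]])
        fix \<omega> assume w: "\<omega> \<in> space M" and e: "exp (X \<omega>) + exp (- X \<omega>) - 2 = 0"
        have "X \<omega> = 0"
        proof (rule ccontr)
          assume "X \<omega> \<noteq> 0"
          then have "1 + X \<omega> < exp (X \<omega>)" "1 + (- X \<omega>) < exp (- X \<omega>)"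
            using exp_strict[of "X \<omega>"] exp_strict[of "- X \<omega>"] by auto
          then show False using e by linarith
        qed
        then have "ln (eta_test \<omega>) = ln eta_train" by (simp add: X_def c_def)
        then show "eta_test \<omega> = eta_train" using w eta_pos train_pos by simp
      qed
      then show False using nonconst by blast
    qed
    moreover have "(\<integral>\<omega>. exp (X \<omega>) + exp (- X \<omega>) - 2 \<partial>M) \<ge> 0"
      by (intro integral_nonneg_AE AE_I2) (use nn2 in blast)
    ultimately show ?thesis by linarith
  qed
  have gt1: "(\<integral>\<omega>. exp (- X \<omega>) \<partial>M) > 1"
  proof -
    have "(\<integral>\<omega>. exp (X \<omega>) + exp (- X \<omega>) - 2 \<partial>M) = (\<integral>\<omega>. exp (X \<omega>) \<partial>M) + (\<integral>\<omega>. exp (- X \<omega>) \<partial>M) - 2"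
      using int_ep int_em P.prob_space by simp
    then show ?thesis using cosh_pos eqXI by linarith
  qed
  have Q_eq: "Q = (1/eta_train) * (\<integral>\<omega>. exp (- X \<omega>) \<partial>M)"
  proof -
    have "Q = (\<integral>\<omega>. (1/eta_train) * exp (- X \<omega>) \<partial>M)"
      unfolding Q_def by (rule Bochner_Integration.integral_cong) (auto simp: inv_eq)
    then show ?thesis by simp
  qed
  have Qgt: "Q > 1/eta_train"
    unfolding Q_eq using gt1 train_pos by (simp add: divide_strict_right_mono)
  have Qpos: "Q > 0" using Qgt train_pos by (smt (verit) divide_pos_pos)
  define \<epsilon> where "\<epsilon> = min k \<gamma> / 2"
  have e_pos: "\<epsilon> > 0" and e_k: "\<epsilon> < k" and e_g: "\<epsilon> \<le> \<gamma>"
    using k_pos gamma_pos by (auto simp: \<epsilon>_def)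
  define t where "t = \<epsilon> / \<gamma>"
  have t0: "t > 0" and t1: "t \<le> 1" using e_pos e_g gamma_pos by (auto simp: t_def)
  have int1: "integrable M (\<lambda>\<omega>. 1 + 1 / eta_test \<omega>)" using inv_int by simp
  have nn1: "(\<integral>\<^sup>+\<omega>. ennreal (1 + 1 / eta_test \<omega>) \<partial>M) < \<infinity>"
  proof -
    have "(\<integral>\<^sup>+\<omega>. ennreal (1 + 1 / eta_test \<omega>) \<partial>M) = ennreal (\<integral>\<omega>. 1 + 1 / eta_test \<omega> \<partial>M)"
      by (rule nn_integral_eq_integral[OF int1]) (use eta_pos in \<open>auto intro!: AE_I2 add_nonneg_nonneg\<close>)
    then show ?thesis by simp
  qed
  have nn_neg: "(\<integral>\<^sup>+\<omega>. ennreal (eta_test \<omega> powr (-t)) \<partial>M) < \<infinity>"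
  proof -
    have "(\<integral>\<^sup>+\<omega>. ennreal (eta_test \<omega> powr (-t)) \<partial>M) \<le> (\<integral>\<^sup>+\<omega>. ennreal (1 + 1 / eta_test \<omega>) \<partial>M)"
      by (intro nn_integral_mono ennreal_leI neg_powr_bound) (use eta_pos t0 t1 in auto)
    then show ?thesis using nn1 by (simp add: le_less_trans)
  qed
  have nn_pos: "(\<integral>\<^sup>+\<omega>. ennreal (eta_test \<omega> powr t) \<partial>M) < \<infinity>"
  proof -
    have "(\<integral>\<^sup>+\<omega>. ennreal (eta_train powr t * exp (t * X \<omega>)) \<partial>M) = (\<integral>\<^sup>+\<omega>. ennreal (eta_train powr t * exp (t * (- X \<omega>))) \<partial>M)"
      using symnn[of "\<lambda>x. ennreal (eta_train powr t * exp (t * x))"] by simp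
    moreover have "(\<integral>\<^sup>+\<omega>. ennreal (eta_train powr t * exp (t * X \<omega>)) \<partial>M) = (\<integral>\<^sup>+\<omega>. ennreal (eta_test \<omega> powr t) \<partial>M)"
    proof (rule nn_integral_cong)
      fix \<omega> assume "\<omega> \<in> space M"
      then have "eta_test \<omega> > 0" using eta_pos by simp
      then show "ennreal (eta_train powr t * exp (t * X \<omega>)) = ennreal (eta_test \<omega> powr t)"
        using train_pos by (simp add: X_def c_def powr_def exp_add[symmetric] algebra_simps)
    qed
    moreover have "(\<integral>\<^sup>+\<omega>. ennreal (eta_train powr t * exp (t * (- X \<omega>))) \<partial>M) = (\<integral>\<^sup>+\<omega>. ennreal (eta_train powr (2 * t)) * ennreal (eta_test \<omega> powr (-t)) \<partial>M)"
    proof (rule nn_integral_cong)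
      fix \<omega> assume "\<omega> \<in> space M"
      then have "eta_test \<omega> > 0" using eta_pos by simp
      then show "ennreal (eta_train powr t * exp (t * (- X \<omega>))) = ennreal (eta_train powr (2 * t)) * ennreal (eta_test \<omega> powr (-t))"
        using train_pos by (simp add: X_def c_def powr_def exp_add[symmetric] algebra_simps ennreal_mult''[symmetric])
    qed
    moreover have "(\<integral>\<^sup>+\<omega>. ennreal (eta_train powr (2 * t)) * ennreal (eta_test \<omega> powr (-t)) \<partial>M) < \<infinity>"
      using nn_neg by (simp add: nn_integral_cmult ennreal_mult_less_top)
    ultimately show ?thesis by simp
  qed
  have mom_fin: "(\<integral>\<^sup>+\<omega>. ennreal (Y \<omega> powr p) \<partial>M) < \<infinity>"
    if "k + p > 0" "(\<integral>\<^sup>+\<omega>. ennreal (eta_test \<omega> powr (- p / \<gamma>)) \<partial>M) < \<infinity>" for p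
  proof -
    have "(\<integral>\<^sup>+\<omega>. ennreal (Y \<omega> powr p) \<partial>M)
      = (\<integral>\<^sup>+\<omega>. ennreal (eta_test \<omega> powr (- p / \<gamma>)) * ennreal (Gamma ((k+p)/\<gamma>) / Gamma (k/\<gamma>)) \<partial>M)"
      unfolding S.Y_moment[OF that(1)]
    proof (rule nn_integral_cong)
      have Gnn: "Gamma ((k+p)/\<gamma>) / Gamma (k/\<gamma>) \<ge> 0"
        using G0 Gamma_real_pos[of "(k+p)/\<gamma>"] that(1) gamma_pos by simp
      fix \<omega> show "ennreal (eta_test \<omega> powr (- p / \<gamma>) * (Gamma ((k+p)/\<gamma>) / Gamma (k/\<gamma>)))
         = ennreal (eta_test \<omega> powr (- p / \<gamma>)) * ennreal (Gamma ((k+p)/\<gamma>) / Gamma (k/\<gamma>))"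
        by (rule ennreal_mult''[OF Gnn])
    qed
    also have "\<dots> = (\<integral>\<^sup>+\<omega>. ennreal (eta_test \<omega> powr (- p / \<gamma>)) \<partial>M) * ennreal (Gamma ((k+p)/\<gamma>) / Gamma (k/\<gamma>))"
      by (rule nn_integral_multc) measurable
    finally show ?thesis using that(2) by (simp add: ennreal_mult_less_top)
  qed
  have intYe: "integrable M (\<lambda>\<omega>. Y \<omega> powr \<epsilon>)"
    by (rule integrableI_nonneg) (use mom_fin[of \<epsilon>] e_pos k_pos nn_neg in \<open>auto simp: t_def\<close>)
  have intYme: "integrable M (\<lambda>\<omega>. Y \<omega> powr (-\<epsilon>))"
    by (rule integrableI_nonneg) (use mom_fin[of "-\<epsilon>"] e_k nn_pos in \<open>auto simp: t_def\<close>)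
  have nnYg: "(\<integral>\<^sup>+\<omega>. ennreal (Y \<omega> powr \<gamma>) \<partial>M) = ennreal ((k/\<gamma>) * Q)"
  proof -
    have "(\<integral>\<^sup>+\<omega>. ennreal (Y \<omega> powr \<gamma>) \<partial>M)
       = (\<integral>\<^sup>+\<omega>. ennreal (eta_test \<omega> powr (- \<gamma> / \<gamma>) * (Gamma ((k+\<gamma>)/\<gamma>) / Gamma (k/\<gamma>))) \<partial>M)"
      by (rule S.Y_moment) (use k_pos gamma_pos in simp)
    also have "\<dots> = (\<integral>\<^sup>+\<omega>. ennreal ((k/\<gamma>) * (1 / eta_test \<omega>)) \<partial>M)"
    proof (rule nn_integral_cong)
      fix \<omega> assume "\<omega> \<in> space M"
      then have p: "eta_test \<omega> > 0" using eta_pos by simp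
      have "Gamma ((k+\<gamma>)/\<gamma>) = (k/\<gamma>) * Gamma (k/\<gamma>)"
      proof -
        have "k/\<gamma> > 0" using gamma_pos k_pos by simp
        then have "k/\<gamma> \<notin> \<int>\<^sub>\<le>\<^sub>0" using nonpos_Ints_nonpos[of "k/\<gamma>"] by linarith
        then show ?thesis using gamma_pos Gamma_plus1[of "k/\<gamma>"] by (simp add: add_divide_distrib)
      qed
      then show "ennreal (eta_test \<omega> powr (- \<gamma> / \<gamma>) * (Gamma ((k+\<gamma>)/\<gamma>) / Gamma (k/\<gamma>))) = ennreal ((k/\<gamma>) * (1 / eta_test \<omega>))"
        using p gamma_pos G0 by (simp add: powr_minus_divide mult.commute)
    qed
    also have "\<dots> = ennreal (\<integral>\<omega>. (k/\<gamma>) * (1 / eta_test \<omega>) \<partial>M)"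
    proof (rule nn_integral_eq_integral)
      show "integrable M (\<lambda>\<omega>. (k/\<gamma>) * (1 / eta_test \<omega>))" by (rule integrable_mult_right) (rule inv_int)
      show "AE \<omega> in M. 0 \<le> (k/\<gamma>) * (1 / eta_test \<omega>)" using eta_pos k_pos gamma_pos by (auto intro!: AE_I2)
    qed
    also have "(\<integral>\<omega>. (k/\<gamma>) * (1 / eta_test \<omega>) \<partial>M) = (k/\<gamma>) * Q"
      unfolding Q_def by (rule integral_mult_right_zero)
    finally show ?thesis .
  qed
  have intYg: "integrable M (\<lambda>\<omega>. Y \<omega> powr \<gamma>)"
    by (rule integrableI_nonneg) (auto simp: nnYg)
  have IYg: "(\<integral>\<omega>. Y \<omega> powr \<gamma> \<partial>M) = (k/\<gamma>) * Q"
  proof -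
    have "ennreal (\<integral>\<omega>. Y \<omega> powr \<gamma> \<partial>M) = ennreal ((k/\<gamma>) * Q)"
      using nn_integral_eq_integral[OF intYg] nnYg by simp
    then show ?thesis using Qpos k_pos gamma_pos by (subst (asm) ennreal_inj) auto
  qed
  have intlnY: "integrable M (\<lambda>\<omega>. ln (Y \<omega>))"
  proof (rule Bochner_Integration.integrable_bound[where f="\<lambda>\<omega>. (Y \<omega> powr \<epsilon> + Y \<omega> powr (-\<epsilon>)) / \<epsilon>"])
    show "integrable M (\<lambda>\<omega>. (Y \<omega> powr \<epsilon> + Y \<omega> powr (-\<epsilon>)) / \<epsilon>)"
      using intYe intYme by simp
    show "(\<lambda>\<omega>. ln (Y \<omega>)) \<in> borel_measurable M" by measurable
    show "AE \<omega> in M. norm (ln (Y \<omega>)) \<le> norm ((Y \<omega> powr \<epsilon> + Y \<omega> powr (-\<epsilon>)) / \<epsilon>)"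
      using S.Y_pos_AE
    proof eventually_elim
      case (elim \<omega>)
      then show ?case using log_bound[OF elim e_pos] e_pos by simp
    qed
  qed
  define B where "B = ln (Gamma (k/\<gamma>)) - ln \<gamma> - (k - 1) * (\<integral>\<omega>. ln (Y \<omega>) \<partial>M)"
  define L where "L \<sigma> = k * ln \<sigma> + (k/\<gamma>) * Q / \<sigma> powr \<gamma>" for \<sigma>
  have loss_AE: "AE \<omega> in M. - ln (gengamma_density k \<gamma> \<sigma> (Y \<omega>))
      = ln (Gamma (k/\<gamma>)) - ln \<gamma> + k * ln \<sigma> - (k - 1) * ln (Y \<omega>) + Y \<omega> powr \<gamma> / \<sigma> powr \<gamma>"
    if "\<sigma> > 0" for \<sigma>
    using S.Y_pos_AE by eventually_elim (rule ln_gg[OF k_pos gamma_pos that])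
  have int_rhs: "integrable M (\<lambda>\<omega>. ln (Gamma (k/\<gamma>)) - ln \<gamma> + k * ln \<sigma> - (k - 1) * ln (Y \<omega>) + Y \<omega> powr \<gamma> / \<sigma> powr \<gamma>)" for \<sigma>
    using intlnY intYg by simp
  have int_loss: "integrable M (\<lambda>\<omega>. - ln (gengamma_density k \<gamma> \<sigma> (Y \<omega>)))" if "\<sigma> > 0" for \<sigma>
  proof -
    have "integrable M (\<lambda>\<omega>. - ln (gengamma_density k \<gamma> \<sigma> (Y \<omega>))) =
      integrable M (\<lambda>\<omega>. ln (Gamma (k/\<gamma>)) - ln \<gamma> + k * ln \<sigma> - (k - 1) * ln (Y \<omega>) + Y \<omega> powr \<gamma> / \<sigma> powr \<gamma>)"
      by (rule integrable_cong_AE) (use loss_AE[OF that] in auto)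
    then show ?thesis using int_rhs by simp
  qed
  have loss_eq: "exp_log_loss M Y k \<gamma> \<sigma> = B + L \<sigma>" if "\<sigma> > 0" for \<sigma>
  proof -
    have "exp_log_loss M Y k \<gamma> \<sigma> = (\<integral>\<omega>. ln (Gamma (k/\<gamma>)) - ln \<gamma> + k * ln \<sigma> - (k - 1) * ln (Y \<omega>) + Y \<omega> powr \<gamma> / \<sigma> powr \<gamma> \<partial>M)"
      unfolding exp_log_loss_def
      by (rule integral_cong_AE) (use loss_AE[OF that] in auto)
    also have "\<dots> = ln (Gamma (k/\<gamma>)) - ln \<gamma> + k * ln \<sigma> - (k - 1) * (\<integral>\<omega>. ln (Y \<omega>) \<partial>M) + (\<integral>\<omega>. Y \<omega> powr \<gamma> \<partial>M) / \<sigma> powr \<gamma>"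
      using intlnY intYg P.prob_space by simp
    finally show ?thesis unfolding B_def L_def IYg by simp
  qed
  define \<sigma>s where "\<sigma>s = Q powr (1/\<gamma>)"
  have ss_pos: "\<sigma>s > 0" using Qpos by (simp add: \<sigma>s_def)
  have Lmin: "L \<sigma>s \<le> L \<sigma>" if "\<sigma> > 0" for \<sigma>
    using min_lemma(1)[OF k_pos gamma_pos Qpos that] by (simp add: L_def \<sigma>s_def)
  have Lstrict: "L \<sigma>s < L \<sigma>" if "\<sigma> > 0" "\<sigma> \<noteq> \<sigma>s" for \<sigma>
    using min_lemma(2)[OF k_pos gamma_pos Qpos that(1)] that(2) by (simp add: L_def \<sigma>s_def)
  have ismin: "\<forall>\<sigma>>0. exp_log_loss M Y k \<gamma> \<sigma>s \<le> exp_log_loss M Y k \<gamma> \<sigma>"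
    using Lmin loss_eq ss_pos by simp
  have uniq: "s = \<sigma>s" if "s > 0" "\<forall>\<sigma>>0. exp_log_loss M Y k \<gamma> s \<le> exp_log_loss M Y k \<gamma> \<sigma>" for s
  proof (rule ccontr)
    assume "s \<noteq> \<sigma>s"
    then have "L \<sigma>s < L s" using Lstrict that(1) by simp
    moreover have "exp_log_loss M Y k \<gamma> s \<le> exp_log_loss M Y k \<gamma> \<sigma>s" using that ss_pos by simp
    ultimately show False using loss_eq[OF that(1)] loss_eq[OF ss_pos] by simp
  qed
  have ss_pow: "\<sigma>s powr \<gamma> = Q" using Qpos gamma_pos by (simp add: \<sigma>s_def powr_powr)
  have ss_gt: "\<sigma>s > scale_of_nat \<gamma> eta_train"
  proof -
    have "(1/eta_train) powr (1/\<gamma>) < Q powr (1/\<gamma>)"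
      by (rule powr_less_mono2) (use gamma_pos train_pos Qgt in auto)
    moreover have "(1/eta_train) powr (1/\<gamma>) = eta_train powr (-1/\<gamma>)"
      using train_pos by (simp add: powr_divide powr_minus_divide)
    ultimately show ?thesis by (simp add: scale_of_nat_def \<sigma>s_def)
  qed
  show ?thesis
  proof (intro conjI allI impI)
    show "integrable M (\<lambda>\<omega>. - ln (gengamma_density k \<gamma> \<sigma> (Y \<omega>)))" if "\<sigma> > 0" for \<sigma>
      using int_loss[OF that] .
    show "\<exists>!s. s > 0 \<and> (\<forall>\<sigma>>0. exp_log_loss M Y k \<gamma> s \<le> exp_log_loss M Y k \<gamma> \<sigma>)"
    proof (rule ex1I[where a=\<sigma>s])
      show "\<sigma>s > 0 \<and> (\<forall>\<sigma>>0. exp_log_loss M Y k \<gamma> \<sigma>s \<le> exp_log_loss M Y k \<gamma> \<sigma>)"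
        using ss_pos ismin by simp
      fix s assume "s > 0 \<and> (\<forall>\<sigma>>0. exp_log_loss M Y k \<gamma> s \<le> exp_log_loss M Y k \<gamma> \<sigma>)"
      then show "s = \<sigma>s" using uniq by simp
    qed
  next
    fix s assume a: "s > 0 \<and> (\<forall>\<sigma>>0. exp_log_loss M Y k \<gamma> s \<le> exp_log_loss M Y k \<gamma> \<sigma>)"
    then have "s = \<sigma>s" using uniq by blast
    then show "s powr \<gamma> = (\<integral>\<omega>. 1 / eta_test \<omega> \<partial>M)" "s > scale_of_nat \<gamma> eta_train"
      using ss_pow ss_gt by (simp_all add: Q_def)
  qed
qed

end
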